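(* Let $N\ge1$ and let $\mathbf a\in\mathbb{R}^{N+1}$ have either all coordinates strictly positive or all coordinates strictly negative. Let $\mathcal C_{\mathbf a}$, $\oplus_{\mathcal C_{\mathbf a}}$ and $\mathbf e_{\mathbf a}=\mathcal C_{\mathbf a}(\mathbf 1)$ be as in the context. Then the logarithm map $\mathrm{Log}_{\mathcal C_{\mathbf a}}:\Delta_N^0\to T_{\mathbf e_{\mathbf a}}\Delta_N^0$ of the Lie group $(\Delta_N^0,\oplus_{\mathcal C_{\mathbf a}})$ is given, for $\boldsymbol\lambda\in\Delta_N^0$ and $i=1,\dots,N+1$, by $$\big(\mathrm{Log}_{\mathcal C_{\mathbf a}}(\boldsymbol\lambda)\big)_i=(\mathbf e_{\mathbf a})_i\left(\ln\lambda_i-\frac{a_i}{\sum_{k=1}^{N+1}a_k(\mathbf e_{\mathbf a})_k}\sum_{j=1}^{N+1}(\mathbf e_{\mathbf a})_j\ln\lambda_j\right).$$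
   Context: $\mathbb{R}^{N+1}_{>0}$ is the open positive orthant, an abelian Lie group under componentwise multiplication $\mathbf x\oplus\mathbf y=(x_1y_1,\dots,x_{N+1}y_{N+1})$ with neutral element $\mathbf 1=(1,\dots,1)$. $\Delta_N^0=\{\boldsymbol\lambda\in\mathbb{R}^{N+1}_{>0}\mid\sum_i\lambda_i=1\}$. For $\mathbf a$ with all coordinates of the same strict sign and $\mathbf x\in\mathbb{R}^{N+1}_{>0}$, let $t_{\mathbf a}(\mathbf x)$ be the unique real solution $t$ of $\sum_{i=1}^{N+1}x_ie^{a_it}=1$, and set $\mathcal C_{\mathbf a}(\mathbf x)=(x_1e^{a_1t_{\mathbf a}(\mathbf x)},\dots,x_{N+1}e^{a_{N+1}t_{\mathbf a}(\mathbf x)})\in\Delta_N^0$ (the unique point of $\Delta_N^0$ on the curve $\{(x_ie^{ta_i})_i\mid t\in\mathbb{R}\}$). The group operation on $\Delta_N^0$ is $\boldsymbol\lambda\oplus_{\mathcal C_{\mathbf a}}\boldsymbol\mu=\mathcal C_{\mathbf a}(\boldsymbol\lambda\oplus\boldsymbol\mu)$; this makes $\Delta_N^0$ an abelian Lie group (isomorphic to the quotient of $(\mathbb{R}^{N+1}_{>0},\oplus)$ by $H_{\mathbf a}=\{(e^{ta_i})_i\mid t\in\mathbb{R}\}$) with neutral element $\mathbf e_{\mathbf a}=\mathcal C_{\mathbf a}(\mathbf 1)$ and Lie algebra identified with $T_{\mathbf e_{\mathbf a}}\Delta_N^0=\{\boldsymbol\xi\in\mathbb{R}^{N+1}\mid\sum_i\xi_i=0\}$.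 Its Lie group exponential map $\mathrm{Exp}_{\mathcal C_{\mathbf a}}:T_{\mathbf e_{\mathbf a}}\Delta_N^0\to\Delta_N^0$ is a global diffeomorphism, and $\mathrm{Log}_{\mathcal C_{\mathbf a}}$ denotes its inverse. *)

theory Defs
  imports "HOL-Analysis.Analysis"
begin

text \<open>Points of R^(N+1) are vectors of type real^'n with CARD('n) = N+1.\<close>

definition pos_orthant :: "(real^'n) set" where
  "pos_orthant = {x. \<forall>i. x $ i > 0}"

definition open_simplex :: "(real^'n) set" where
  "open_simplex = {l. (\<forall>i. l $ i > 0) \<and> (\<Sum>i\<in>UNIV. l $ i) = 1}"

definition cw_mult :: "real^'n \<Rightarrow> real^'n \<Rightarrow> real^'n" where
  "cw_mult x y = (\<chi> i. x $ i * y $ i)"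

definition t_a :: "real^'n \<Rightarrow> real^'n \<Rightarrow> real" where
  "t_a a x = (THE t. (\<Sum>i\<in>UNIV. x $ i * exp (a $ i * t)) = 1)"

definition C_a :: "real^'n \<Rightarrow> real^'n \<Rightarrow> real^'n" where
  "C_a a x = (\<chi> i. x $ i * exp (a $ i * t_a a x))"

definition opC :: "real^'n \<Rightarrow> real^'n \<Rightarrow> real^'n \<Rightarrow> real^'n" where
  "opC a l m = C_a a (cw_mult l m)"

definition e_a :: "real^'n \<Rightarrow> real^'n" where
  "e_a a = C_a a (\<chi> i. 1)"

definition tangent_space :: "(real^'n) set" where
  "tangent_space = {xi. (\<Sum>i\<in>UNIV. xi $ i) = 0}"

definition one_param_subgroup :: "real^'n \<Rightarrow> (real \<Rightarrow> real^'n) \<Rightarrow> bool" where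
  "one_param_subgroup a g \<longleftrightarrow>
     (\<forall>t. g t \<in> open_simplex) \<and>
     (\<forall>s t. g (s + t) = opC a (g s) (g t)) \<and>
     (\<forall>t. g differentiable (at t))"

definition Exp_C :: "real^'n \<Rightarrow> real^'n \<Rightarrow> real^'n" where
  "Exp_C a xi = (THE y. \<exists>g. one_param_subgroup a g \<and> (g has_vector_derivative xi) (at 0) \<and> y = g 1)"

definition Log_C :: "real^'n \<Rightarrow> real^'n \<Rightarrow> real^'n" where
  "Log_C a l = inv_into tangent_space (Exp_C a) l"

end

theory Submission
  imports Defs
begin

definition ss :: "real^'n \<Rightarrow> bool" where
  "ss a \<longleftrightarrow> (\<forall>i. a $ i > 0) \<or> (\<forall>i. a $ i < 0)"

lemma vec_has_vector_derivative:
  fixes f :: "real \<Rightarrow> real^'n"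
  assumes "\<And>i. ((\<lambda>t. f t $ i) has_real_derivative (D $ i)) (at x)"
  shows "(f has_vector_derivative D) (at x)"
  unfolding has_vector_derivative_def
  apply (subst has_derivative_componentwise_within)
  using assms by (auto simp: Basis_vec_def inner_axis has_field_derivative_def mult_commute_abs)

lemma vec_component_deriv:
  fixes f :: "real \<Rightarrow> real^'n"
  assumes "(f has_vector_derivative D) (at x)"
  shows "((\<lambda>t. f t $ i) has_real_derivative (D $ i)) (at x)"
  using bounded_linear.has_vector_derivative[OF bounded_linear_vec_nth assms, of i]
  by (simp add: has_real_derivative_iff_has_vector_derivative)

lemma S_strict_pos:
  fixes a x :: "real^'n"
  assumes "\<forall>i. a$i > 0" "\<forall>i. x$i > 0" "s < t"
  shows "(\<Sum>i\<in>UNIV. x$i * exp (a$i * s)) < (\<Sum>i\<in>UNIV. x$i * exp (a$i * t))"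
  by (rule sum_strict_mono) (auto simp: assms mult_strict_left_mono)

lemma S_strict_neg:
  fixes a x :: "real^'n"
  assumes "\<forall>i. a$i < 0" "\<forall>i. x$i > 0" "s < t"
  shows "(\<Sum>i\<in>UNIV. x$i * exp (a$i * t)) < (\<Sum>i\<in>UNIV. x$i * exp (a$i * s))"
  by (rule sum_strict_mono) (auto simp: assms mult_strict_left_mono_neg)

lemma S_inj:
  fixes a x :: "real^'n"
  assumes "ss a" "\<forall>i. x$i > 0"
    and "(\<Sum>i\<in>UNIV. x$i * exp (a$i * s)) = (\<Sum>i\<in>UNIV. x$i * exp (a$i * t))"
  shows "s = t"
proof (rule ccontr)
  assume "s \<noteq> t"
  have *: False if "p < q"
    "(\<Sum>i\<in>UNIV. x$i * exp (a$i * p)) = (\<Sum>i\<in>UNIV. x$i * exp (a$i * q))" for p q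
    using assms(1) unfolding ss_def
  proof
    assume "\<forall>i. a$i > 0"
    from S_strict_pos[OF this assms(2) that(1)] that(2) show False by simp
  next
    assume "\<forall>i. a$i < 0"
    from S_strict_neg[OF this assms(2) that(1)] that(2) show False by simp
  qed
  from \<open>s \<noteq> t\<close> consider "s < t" | "t < s" by linarith
  then show False
  proof cases
    case 1 then show False using *[of s t] assms(3) by blast
  next
    case 2 then show False using *[of t s] assms(3) by simp
  qed
qed

lemma S_ex_pos:
  fixes a x :: "real^'n"
  assumes apos: "\<forall>i. a$i > 0" and xpos: "\<forall>i. x$i > 0"
  shows "\<exists>t. (\<Sum>i\<in>UNIV. x$i * exp (a$i * t)) = 1"
proof -
  define S where "S t = (\<Sum>i\<in>UNIV. x$i * exp (a$i * t))" for t
  define c where "c = real CARD('n)"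
  have cpos: "c > 0" unfolding c_def by simp
  obtain j :: 'n where True by auto
  define t1 where "t1 = - ln (x$j) / a$j"
  have aj: "a$j > 0" and xj: "x$j > 0" using apos xpos by auto
  have "a$j * t1 = - ln (x$j)" using aj by (simp add: t1_def)
  then have "x$j * exp (a$j * t1) = 1"
    using xj by (simp add: exp_minus)
  moreover have "x$j * exp (a$j * t1) \<le> S t1"
    unfolding S_def by (rule member_le_sum) (use xpos in \<open>auto intro!: mult_nonneg_nonneg less_imp_le\<close>)
  ultimately have S1: "1 \<le> S t1" by simp
  define t0 where "t0 = - (\<Sum>i\<in>UNIV. \<bar>ln (c * x$i)\<bar> / a$i)"
  have tm: "x$i * exp (a$i * t0) \<le> 1 / c" for i
  proof -
    have "\<bar>ln (c * x$i)\<bar> / a$i \<le> (\<Sum>i\<in>UNIV. \<bar>ln (c * x$i)\<bar> / a$i)"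
      by (rule member_le_sum) (auto simp: apos less_imp_le)
    then have "t0 \<le> - (\<bar>ln (c * x$i)\<bar> / a$i)" unfolding t0_def by linarith
    then have "a$i * t0 \<le> a$i * (- (\<bar>ln (c * x$i)\<bar> / a$i))"
      by (rule mult_left_mono) (use apos in \<open>auto intro: less_imp_le\<close>)
    also have "\<dots> = - \<bar>ln (c * x$i)\<bar>" using apos by (simp add: less_imp_neq[symmetric])
    also have "\<dots> \<le> - ln (c * x$i)" by linarith
    finally have "exp (a$i * t0) \<le> exp (- ln (c * x$i))" by simp
    also have "\<dots> = 1 / (c * x$i)" using cpos xpos by (simp add: exp_minus exp_ln field_simps)
    finally have "x$i * exp (a$i * t0) \<le> x$i * (1 / (c * x$i))"
      by (rule mult_left_mono) (use xpos in \<open>auto intro: less_imp_le\<close>)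
    also have "\<dots> = 1 / c" using xpos by (simp add: less_imp_neq[symmetric])
    finally show ?thesis .
  qed
  have S0: "S t0 \<le> 1"
  proof -
    have "S t0 \<le> (\<Sum>i::'n\<in>UNIV. 1 / c)" unfolding S_def using tm by (intro sum_mono) auto
    also have "\<dots> = 1" using cpos by (simp add: c_def)
    finally show ?thesis .
  qed
  have t01: "t0 \<le> t1"
  proof (rule ccontr)
    assume "\<not> t0 \<le> t1"
    then have "S t1 < S t0" unfolding S_def using S_strict_pos[OF apos xpos] by auto
    with S0 S1 show False by linarith
  qed
  have cont: "continuous_on {t0..t1} S"
    unfolding S_def by (intro continuous_intros)
  from IVT'[OF S0 S1 t01 cont] obtain t where "S t = 1" by blast
  then show ?thesis unfolding S_def by blast
qed

lemma S_ex:
  fixes a x :: "real^'n"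
  assumes "ss a" and xpos: "\<forall>i. x$i > 0"
  shows "\<exists>t. (\<Sum>i\<in>UNIV. x$i * exp (a$i * t)) = 1"
proof (cases "\<forall>i. a$i > 0")
  case True show ?thesis by (rule S_ex_pos[OF True xpos])
next
  case False
  then have neg: "\<forall>i. a$i < 0" using assms(1) unfolding ss_def by blast
  have pos': "\<forall>i. (\<chi> i. - a$i) $ i > 0" using neg by simp
  obtain t where "(\<Sum>i\<in>UNIV. x$i * exp ((\<chi> i. - a$i)$i * t)) = 1"
    using S_ex_pos[OF pos' xpos] by blast
  then have "(\<Sum>i\<in>UNIV. x$i * exp (a$i * (-t))) = 1" by simp
  then show ?thesis by blast
qed

lemma tA:
  fixes a x :: "real^'n"
  assumes "ss a" "\<forall>i. x$i > 0"
  shows "(\<Sum>i\<in>UNIV. x$i * exp (a$i * t_a a x)) = 1"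
proof -
  have "\<exists>!t. (\<Sum>i\<in>UNIV. x$i * exp (a$i * t)) = 1"
    by (rule ex_ex1I) (use S_ex[OF assms] S_inj[OF assms] in auto)
  then show ?thesis unfolding t_a_def by (rule theI')
qed

lemma tA_eq:
  fixes a x :: "real^'n"
  assumes "ss a" "\<forall>i. x$i > 0" "(\<Sum>i\<in>UNIV. x$i * exp (a$i * s)) = 1"
  shows "t_a a x = s"
  by (rule S_inj[OF assms(1,2)]) (simp add: tA[OF assms(1,2)] assms(3))

lemma C_nth: "C_a a x $ i = x$i * exp (a$i * t_a a x)"
  by (simp add: C_a_def)

lemma C_in:
  fixes a x :: "real^'n"
  assumes "ss a" "\<forall>i. x$i > 0"
  shows "C_a a x \<in> open_simplex"
  using tA[OF assms] assms(2) by (simp add: open_simplex_def C_nth)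

lemma C_char:
  fixes a x y :: "real^'n"
  assumes "ss a" "\<forall>i. x$i > 0" "y \<in> open_simplex" "\<forall>i. y$i = x$i * exp (a$i * s)"
  shows "C_a a x = y"
proof -
  have "(\<Sum>i\<in>UNIV. x$i * exp (a$i * s)) = 1"
    using assms(3,4) by (simp add: open_simplex_def)
  then have "t_a a x = s" using tA_eq[OF assms(1,2)] by blast
  then show ?thesis using assms(4) by (simp add: vec_eq_iff C_nth)
qed

lemma sum_ax_ne0:
  fixes a x :: "real^'n"
  assumes "ss a" "\<forall>k. x$k > 0"
  shows "(\<Sum>k\<in>UNIV. a$k * x$k) \<noteq> 0"
proof (cases "\<forall>i. a$i > 0")
  case True
  then have "(\<Sum>k\<in>UNIV. a$k * x$k) > 0" using assms(2) by (intro sum_pos) auto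
  then show ?thesis by simp
next
  case False
  then have neg: "\<forall>i. a$i < 0" using assms(1) unfolding ss_def by auto
  have "(\<Sum>k\<in>UNIV. - (a$k * x$k)) > 0" using assms(2) neg
    by (intro sum_pos) (auto simp: mult_neg_pos)
  then show ?thesis by (simp add: sum_negf)
qed

lemma e_in: "ss a \<Longrightarrow> e_a a \<in> open_simplex"
  unfolding e_a_def by (rule C_in) auto

lemma e_pos: "ss a \<Longrightarrow> e_a a $ i > 0"
  using e_in unfolding open_simplex_def by blast

lemma additive_deriv:
  fixes h :: "real \<Rightarrow> real"
  assumes add: "\<forall>s t. h (s + t) = h s + h t" and d0: "(h has_real_derivative d) (at 0)"
  shows "h 1 = d"
proof -
  have h0: "h 0 = 0" using add[rule_format, of 0 0] by simp
  have D: "(h has_real_derivative d) (at x)" for x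
  proof -
    have eq: "h = (\<lambda>y. h x + h (y + - x))"
    proof
      fix y show "h y = h x + h (y + - x)" using add[rule_format, of x "y + - x"] by simp
    qed
    have "((\<lambda>y. h (y + - x)) has_real_derivative d) (at x)"
      using DERIV_shift[of h d x "- x"] d0 by simp
    then have "((\<lambda>y. h x + h (y + - x)) has_real_derivative 0 + d) (at x)"
      by (intro DERIV_add DERIV_const)
    then show ?thesis using eq by simp
  qed
  have "\<forall>x. ((\<lambda>y. h y - d * y) has_real_derivative 0) (at x)"
  proof
    fix x
    have "((\<lambda>y. h y - d * y) has_real_derivative d - d * 1) (at x)"
      by (intro DERIV_diff D DERIV_cmult DERIV_ident)
    then show "((\<lambda>y. h y - d * y) has_real_derivative 0) (at x)" by simp
  qed
  from DERIV_isconst_all[OF this, of 1 0] h0 show ?thesis by simp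
qed

lemma opC_nth: "opC a x y $ i = x$i * y$i * exp (a$i * t_a a (cw_mult x y))"
  by (simp add: opC_def C_nth cw_mult_def)

lemma aux_idem:
  fixes x E :: real
  assumes "x > 0" "x = x * x * E"
  shows "x * E = 1"
proof -
  have "x * (x * E) = x * 1"
    by (simp only: mult.assoc[symmetric] mult_1_right) (rule assms(2)[symmetric])
  then show ?thesis using assms(1) by simp
qed

lemma ops_unique:
  fixes a xi :: "real^'n" and g :: "real \<Rightarrow> real^'n"
  assumes ss: "ss a" and og: "one_param_subgroup a g"
    and dg: "(g has_vector_derivative xi) (at 0)"
  shows "g 1 = C_a a (\<chi> i. exp (xi$i / e_a a $ i))"
proof -
  have gin: "g t \<in> open_simplex" for t using og unfolding one_param_subgroup_def by blast
  have hom: "g (s + t) = opC a (g s) (g t)" for s t using og unfolding one_param_subgroup_def by blast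
  have gpos: "g t $ i > 0" for t i using gin[of t] unfolding open_simplex_def by blast
  have gne: "g t $ i \<noteq> 0" for t i using gpos[of t i] by linarith
  define \<tau> where "\<tau> s t = t_a a (cw_mult (g s) (g t))" for s t
  have hom_nth: "g (s + t) $ i = g s $ i * g t $ i * exp (a$i * \<tau> s t)" for s t i
    unfolding \<tau>_def by (simp only: hom opC_nth)
  have g0: "g 0 = e_a a"
  proof -
    have "g 0 $ i = 1 * exp (a$i * (- \<tau> 0 0))" for i
    proof -
      have eq: "g 0 $ i = g 0 $ i * g 0 $ i * exp (a$i * \<tau> 0 0)"
        using hom_nth[of 0 0 i] by (simp only: add_0_left)
      have "g 0 $ i * exp (a$i * \<tau> 0 0) = 1" by (rule aux_idem[OF gpos eq])
      then have "g 0 $ i = 1 / exp (a$i * \<tau> 0 0)" by (simp add: field_simps)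
      then show ?thesis by (simp add: exp_minus inverse_eq_divide)
    qed
    then have "C_a a (\<chi> i. 1) = g 0"
      by (intro C_char[OF ss _ gin, where s = "- \<tau> 0 0"]) auto
    then show ?thesis unfolding e_a_def by simp
  qed
  define G where "G i t = ln (g t $ i)" for i t
  have Gadd: "G i (s + t) = G i s + G i t + a$i * \<tau> s t" for i s t
    unfolding G_def hom_nth by (simp add: ln_mult gpos gne)
  define A where "A = (\<Sum>k\<in>UNIV. a$k)"
  have A0: "A \<noteq> 0" using sum_ax_ne0[OF ss, of "\<chi> k. 1"] by (simp add: A_def)
  define h where "h i t = G i t - a$i / A * (\<Sum>k\<in>UNIV. G k t)" for i t
  have hadd: "\<forall>s t. h i (s + t) = h i s + h i t" for i
  proof (intro allI)
    fix s t
    have "(\<Sum>k\<in>UNIV. G k (s + t)) = (\<Sum>k\<in>UNIV. G k s) + (\<Sum>k\<in>UNIV. G k t) + A * \<tau> s t"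
      by (simp add: Gadd sum.distrib A_def sum_distrib_right)
    then show "h i (s + t) = h i s + h i t" unfolding h_def using A0 by (simp add: Gadd field_simps)
  qed
  have dG: "(G k has_real_derivative xi$k / e_a a $ k) (at 0)" for k
  proof -
    have "((\<lambda>t. ln (g t $ k)) has_real_derivative inverse (g 0 $ k) * xi$k) (at 0)"
      by (rule DERIV_chain2[OF DERIV_ln[OF gpos] vec_component_deriv[OF dg]])
    moreover have "G k = (\<lambda>t. ln (g t $ k))" by (rule ext) (simp add: G_def)
    ultimately show ?thesis by (simp add: g0 divide_inverse mult.commute)
  qed
  have dh: "(h i has_real_derivative (xi$i / e_a a $ i - a$i / A * (\<Sum>k\<in>UNIV. xi$k / e_a a $ k))) (at 0)" for i
  proof -
    have "h i = (\<lambda>t. G i t - a$i / A * (\<Sum>k\<in>UNIV. G k t))" by (rule ext) (simp add: h_def)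
    moreover have "((\<lambda>t. G i t - a$i / A * (\<Sum>k\<in>UNIV. G k t)) has_real_derivative
        (xi$i / e_a a $ i - a$i / A * (\<Sum>k\<in>UNIV. xi$k / e_a a $ k))) (at 0)"
      by (intro DERIV_diff DERIV_cmult DERIV_sum dG)
    ultimately show ?thesis by simp
  qed
  have h1: "h i 1 = xi$i / e_a a $ i - a$i / A * (\<Sum>k\<in>UNIV. xi$k / e_a a $ k)" for i
    by (rule additive_deriv[OF hadd dh])
  define r where "r = ((\<Sum>k\<in>UNIV. G k 1) - (\<Sum>k\<in>UNIV. xi$k / e_a a $ k)) / A"
  have G1: "G i 1 = xi$i / e_a a $ i + a$i * r" for i
  proof -
    have "G i 1 - a$i / A * (\<Sum>k\<in>UNIV. G k 1) = xi$i / e_a a $ i - a$i / A * (\<Sum>k\<in>UNIV. xi$k / e_a a $ k)"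
      using h1[of i] unfolding h_def .
    then show ?thesis unfolding r_def using A0 by (simp add: field_simps)
  qed
  have "g 1 $ i = (\<chi> i. exp (xi$i / e_a a $ i)) $ i * exp (a$i * r)" for i
  proof -
    have "g 1 $ i = exp (G i 1)" using gpos by (simp add: G_def)
    then show ?thesis by (simp add: G1 exp_add)
  qed
  then have "C_a a (\<chi> i. exp (xi$i / e_a a $ i)) = g 1"
    by (intro C_char[OF ss _ gin, where s = r]) auto
  then show ?thesis by simp
qed

lemma cw_nth: "cw_mult x y $ i = x$i * y$i"
  by (simp add: cw_mult_def)

lemma ops_exists:
  fixes a xi :: "real^'n"
  assumes ss: "ss a" and xiT: "xi \<in> tangent_space"
  shows "\<exists>g. one_param_subgroup a g \<and> (g has_vector_derivative xi) (at 0)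
           \<and> g 1 = C_a a (\<chi> i. exp (xi$i / e_a a $ i))"
proof -
  define b where "b = (\<chi> i. xi$i / e_a a $ i)"
  define c where "c t = t_a a (\<chi> i. exp (t * b$i))" for t
  define g where "g t = C_a a (\<chi> i. exp (t * b$i))" for t
  have xp: "\<forall>i. (\<chi> i. exp (t * b$i)) $ i > 0" for t by simp
  have gnth: "g t $ i = exp (t * b$i + a$i * c t)" for t i
    by (simp add: g_def c_def C_nth exp_add)
  have gin: "g t \<in> open_simplex" for t unfolding g_def by (rule C_in[OF ss xp])
  have gpos: "g t $ i > 0" for t i using gin[of t] unfolding open_simplex_def by blast
  define F where "F t y = (\<Sum>i\<in>UNIV. exp (t * b$i + y * a$i))" for t y
  have Fsplit: "F t y = (\<Sum>i\<in>UNIV. (\<chi> i. exp (t * b$i)) $ i * exp (a$i * y))" for t y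
    by (simp add: F_def exp_add mult.commute)
  have Finj: "y1 = y2" if "F t y1 = F t y2" for t y1 y2
    using that unfolding Fsplit by (rule S_inj[OF ss xp])
  have Fc: "F t (c t) = 1" for t
    unfolding Fsplit c_def by (rule tA[OF ss xp])
  define \<Phi> where "\<Phi> p = (fst p, F (fst p) (snd p))" for p :: "real \<times> real"
  define \<Psi> where "\<Psi> p = (fst p, THE y. F (fst p) y = snd p)" for p :: "real \<times> real"
  have \<Psi>\<Phi>: "\<Psi> (\<Phi> p) = p" if "p \<in> UNIV" for p
  proof -
    have "(THE y. F (fst p) y = F (fst p) (snd p)) = snd p"
      by (rule the_equality) (auto intro: Finj)
    then show ?thesis by (simp add: \<Psi>_def \<Phi>_def)
  qed
  define Ft where "Ft t y = (\<Sum>i\<in>UNIV. b$i * exp (t * b$i + y * a$i))" for t y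
  define Fy where "Fy t y = (\<Sum>i\<in>UNIV. a$i * exp (t * b$i + y * a$i))" for t y
  have Fy0: "Fy t y \<noteq> 0" for t y
    unfolding Fy_def using sum_ax_ne0[OF ss, of "\<chi> i. exp (t * b$i + y * a$i)"] by simp
  have d\<Phi>: "(\<Phi> has_derivative (\<lambda>q. (fst q, fst q * Ft t y + snd q * Fy t y))) (at (t, y))" for t y
  proof -
    have "((\<lambda>p::real\<times>real. (fst p, \<Sum>i\<in>UNIV. exp (fst p * b$i + snd p * a$i))) has_derivative
       (\<lambda>h. (fst h, \<Sum>i\<in>UNIV. (fst h * b$i + snd h * a$i) * exp (t * b$i + y * a$i)))) (at (t, y))"
      by (rule derivative_eq_intros refl | simp)+
    moreover have "(\<lambda>h. (fst h, \<Sum>i\<in>UNIV. (fst h * b$i + snd h * a$i) * exp (t * b$i + y * a$i)))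
        = (\<lambda>q. (fst q, fst q * Ft t y + snd q * Fy t y))"
      by (rule ext) (simp add: Ft_def Fy_def algebra_simps sum.distrib sum_distrib_left)
    moreover have "\<Phi> = (\<lambda>p. (fst p, \<Sum>i\<in>UNIV. exp (fst p * b$i + snd p * a$i)))"
      by (rule ext) (simp add: \<Phi>_def F_def)
    ultimately show ?thesis by simp
  qed
  define \<Psi>' where "\<Psi>' t y = (\<lambda>q::real\<times>real. (fst q, (snd q - fst q * Ft t y) / Fy t y))" for t y
  have lin: "(\<lambda>q. (fst q, fst q * Ft t y + snd q * Fy t y)) \<circ> \<Psi>' t y = id" for t y
    by (rule ext) (auto simp: \<Psi>'_def Fy0 prod_eq_iff)
  have cont\<Phi>: "continuous_on UNIV \<Phi>"
  proof (rule continuous_at_imp_continuous_on, intro ballI)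
    fix p :: "real \<times> real"
    have "(\<Phi> has_derivative (\<lambda>q. (fst q, fst q * Ft (fst p) (snd p) + snd q * Fy (fst p) (snd p)))) (at (fst p, snd p))" by (rule d\<Phi>)
    then show "isCont \<Phi> p" using has_derivative_continuous by simp
  qed
  have d\<Psi>: "(\<Psi> has_derivative \<Psi>' t (c t)) (at (t, 1))" for t
  proof -
    have "(\<Psi> has_derivative \<Psi>' t (c t)) (at (\<Phi> (t, c t)))"
      by (rule has_derivative_inverse_strong[OF open_UNIV UNIV_I cont\<Phi> \<Psi>\<Phi> d\<Phi> lin])
    moreover have "\<Phi> (t, c t) = (t, 1)" using Fc by (simp add: \<Phi>_def)
    ultimately show ?thesis by simp
  qed
  have c\<Psi>: "c = (\<lambda>t. snd (\<Psi> (t, 1)))"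
  proof
    fix t
    have "(THE y. F t y = 1) = c t"
    proof (rule the_equality)
      show "F t (c t) = 1" by (rule Fc)
      fix y assume "F t y = 1"
      then show "y = c t" using Fc[of t] by (rule_tac Finj[of t]) simp
    qed
    then show "c t = snd (\<Psi> (t, 1))" by (simp add: \<Psi>_def)
  qed
  have dc: "(c has_real_derivative - Ft t (c t) / Fy t (c t)) (at t)" for t
  proof -
    have d1: "((\<lambda>s. (s, 1::real)) has_derivative (\<lambda>h. (h, 0))) (at t)"
      by (intro has_derivative_Pair has_derivative_ident has_derivative_const)
    have d2: "(\<Psi> has_derivative \<Psi>' t (c t)) (at ((\<lambda>s. (s, 1::real)) t))" using d\<Psi> by simp
    have "((\<lambda>s. snd (\<Psi> (s, 1))) has_derivative (\<lambda>h. snd (\<Psi>' t (c t) (h, 0)))) (at t)"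
      using has_derivative_snd[OF has_derivative_compose[OF d1 d2]] .
    moreover have "(\<lambda>h. snd (\<Psi>' t (c t) (h, 0))) = (*) (- Ft t (c t) / Fy t (c t))"
      by (rule ext) (simp add: \<Psi>'_def)
    ultimately show ?thesis unfolding has_field_derivative_def c\<Psi>[symmetric] by simp
  qed
  have dg: "(g has_vector_derivative (\<chi> i. exp (t * b$i + a$i * c t) * (b$i + a$i * (- Ft t (c t) / Fy t (c t))))) (at t)" for t
  proof (rule vec_has_vector_derivative)
    fix i
    have "(\<lambda>s. g s $ i) = (\<lambda>s. exp (s * b$i + a$i * c s))" by (rule ext) (simp add: gnth)
    moreover have "((\<lambda>s. exp (s * b$i + a$i * c s)) has_real_derivative
        exp (t * b$i + a$i * c t) * (b$i + a$i * (- Ft t (c t) / Fy t (c t)))) (at t)"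
      by (rule derivative_eq_intros dc refl | simp)+
    ultimately show "((\<lambda>s. g s $ i) has_real_derivative (\<chi> i. exp (t * b$i + a$i * c t) * (b$i + a$i * (- Ft t (c t) / Fy t (c t)))) $ i) (at t)"
      by simp
  qed
  have enth: "e_a a $ i = exp (a$i * c 0)" for i
    by (simp add: e_a_def c_def C_nth)
  have epos: "e_a a $ i \<noteq> 0" for i using e_pos[OF ss, of i] by simp
  have bx: "b$i * e_a a $ i = xi$i" for i using epos[of i] by (simp add: b_def)
  have ex2: "exp (c 0 * a$i) = e_a a $ i" for i by (simp add: enth mult.commute)
  have bx2: "e_a a $ i * b$i = xi$i" for i using bx[of i] by (simp add: mult.commute)
  have Ft0: "Ft 0 (c 0) = 0"
  proof -
    have ex: "exp (0 * b$i + c 0 * a$i) = e_a a $ i" for i by (simp add: enth mult.commute)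
    have "Ft 0 (c 0) = (\<Sum>i\<in>UNIV. xi$i)"
      unfolding Ft_def ex bx ..
    also have "\<dots> = 0" using xiT by (simp add: tangent_space_def)
    finally show ?thesis .
  qed
  have dg0: "(g has_vector_derivative xi) (at 0)"
  proof -
    have "(\<chi> i. exp (0 * b$i + a$i * c 0) * (b$i + a$i * (- Ft 0 (c 0) / Fy 0 (c 0)))) = xi"
      using bx2 by (simp add: vec_eq_iff Ft0 enth[symmetric])
    then show ?thesis using dg[of 0] by simp
  qed
  have hom: "g (s + t) = opC a (g s) (g t)" for s t
  proof -
    have "C_a a (cw_mult (g s) (g t)) = g (s + t)"
    proof (rule C_char[OF ss _ gin, where s = "c (s + t) - c s - c t"])
      show "\<forall>i. cw_mult (g s) (g t) $ i > 0" using gpos by (simp add: cw_nth)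
      show "\<forall>i. g (s + t) $ i = cw_mult (g s) (g t) $ i * exp (a$i * (c (s + t) - c s - c t))"
      proof
        fix i
        have "(s + t) * b$i + a$i * c (s + t) =
          (s * b$i + a$i * c s) + (t * b$i + a$i * c t) + a$i * (c (s + t) - c s - c t)"
          by (simp add: algebra_simps)
        then show "g (s + t) $ i = cw_mult (g s) (g t) $ i * exp (a$i * (c (s + t) - c s - c t))"
          by (simp add: cw_nth gnth mult_exp_exp)
      qed
    qed
    then show ?thesis by (simp add: opC_def)
  qed
  have "one_param_subgroup a g"
    unfolding one_param_subgroup_def using gin hom dg differentiableI_vector by blast
  moreover have "g 1 = C_a a (\<chi> i. exp (xi$i / e_a a $ i))"
    by (simp add: g_def b_def)
  ultimately show ?thesis using dg0 by blast
qed

lemma Exp_eq: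
  fixes a xi :: "real^'n"
  assumes ss: "ss a" and xiT: "xi \<in> tangent_space"
  shows "Exp_C a xi = C_a a (\<chi> i. exp (xi$i / e_a a $ i))"
proof -
  obtain g where g: "one_param_subgroup a g" "(g has_vector_derivative xi) (at 0)"
      "g 1 = C_a a (\<chi> i. exp (xi$i / e_a a $ i))"
    using ops_exists[OF ss xiT] by blast
  show ?thesis unfolding Exp_C_def
  proof (rule the_equality)
    show "\<exists>g. one_param_subgroup a g \<and> (g has_vector_derivative xi) (at 0)
        \<and> C_a a (\<chi> i. exp (xi$i / e_a a $ i)) = g 1"
      using g by (intro exI[of _ g]) simp
  next
    fix y assume "\<exists>g. one_param_subgroup a g \<and> (g has_vector_derivative xi) (at 0) \<and> y = g 1"
    then obtain g' where "one_param_subgroup a g'" "(g' has_vector_derivative xi) (at 0)" "y = g' 1"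
      by blast
    then show "y = C_a a (\<chi> i. exp (xi$i / e_a a $ i))" using ops_unique[OF ss] by blast
  qed
qed

theorem theorem1:
  fixes a l :: "real^'n"
  assumes "CARD('n) \<ge> 2"
    and "(\<forall>i. a $ i > 0) \<or> (\<forall>i. a $ i < 0)"
    and "l \<in> open_simplex"
  shows "Log_C a l =
    (\<chi> i. e_a a $ i * (ln (l $ i)
       - a $ i / (\<Sum>k\<in>UNIV. a $ k * e_a a $ k) * (\<Sum>j\<in>UNIV. e_a a $ j * ln (l $ j))))"
proof -
  have ss: "ss a" using assms(2) unfolding ss_def .
  define e where "e = e_a a"
  have epos: "e$i > 0" for i using e_pos[OF ss] by (simp add: e_def)
  have ene: "e$i \<noteq> 0" for i using epos[of i] by simp
  have lpos: "l$i > 0" for i using assms(3) unfolding open_simplex_def by blast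
  define A where "A = (\<Sum>k\<in>UNIV. a$k * e$k)"
  have A0: "A \<noteq> 0" unfolding A_def e_def by (rule sum_ax_ne0[OF ss]) (use e_pos[OF ss] in blast)
  define L where "L = (\<Sum>j\<in>UNIV. e$j * ln (l$j))"
  define v where "v = (\<chi> i. e$i * (ln (l$i) - a$i / A * L))"
  have rhs: "(\<chi> i. e_a a $ i * (ln (l $ i)
       - a $ i / (\<Sum>k\<in>UNIV. a $ k * e_a a $ k) * (\<Sum>j\<in>UNIV. e_a a $ j * ln (l $ j)))) = v"
    by (simp add: v_def e_def A_def L_def)
  have vT: "v \<in> tangent_space"
  proof -
    have eq1: "e$i * (ln (l$i) - a$i / A * L) = e$i * ln (l$i) - (a$i * e$i) * (L / A)" for i
      by (simp add: algebra_simps)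
    have "(\<Sum>i\<in>UNIV. v$i) = (\<Sum>i\<in>UNIV. e$i * ln (l$i)) - (\<Sum>i\<in>UNIV. a$i * e$i) * (L / A)"
      by (simp only: v_def vec_lambda_beta eq1 sum_subtractf sum_distrib_right)
    also have "\<dots> = 0" using A0 by (simp add: L_def[symmetric] A_def[symmetric])
    finally show ?thesis by (simp add: tangent_space_def)
  qed
  have Ev: "Exp_C a v = l"
  proof -
    have "C_a a (\<chi> i. exp (v$i / e$i)) = l"
    proof (rule C_char[OF ss _ assms(3), where s = "L / A"])
      show "\<forall>i. (\<chi> i. exp (v$i / e$i)) $ i > 0" by simp
      show "\<forall>i. l$i = (\<chi> i. exp (v$i / e$i)) $ i * exp (a$i * (L / A))"
      proof
        fix i
        have "v$i / e$i + a$i * (L / A) = ln (l$i)" using ene[of i] by (simp add: v_def)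
        then have "exp (v$i / e$i) * exp (a$i * (L / A)) = l$i"
          using lpos[of i] by (simp add: mult_exp_exp)
        then show "l$i = (\<chi> i. exp (v$i / e$i)) $ i * exp (a$i * (L / A))" by simp
      qed
    qed
    then show ?thesis using Exp_eq[OF ss vT] by (simp add: e_def)
  qed
  have uniq: "x = v" if xT: "x \<in> tangent_space" and Ex: "Exp_C a x = l" for x
  proof -
    define \<tau> where "\<tau> = t_a a (\<chi> i. exp (x$i / e$i))"
    have "C_a a (\<chi> i. exp (x$i / e$i)) = l" using Ex Exp_eq[OF ss xT] by (simp add: e_def)
    then have "l$i = exp (x$i / e$i) * exp (a$i * \<tau>)" for i
      by (metis C_nth \<tau>_def vec_lambda_beta)
    then have "ln (l$i) = x$i / e$i + a$i * \<tau>" for i by (simp add: mult_exp_exp)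
    then have xi: "x$i = e$i * (ln (l$i) - a$i * \<tau>)" for i using ene[of i] by (simp add: field_simps)
    have "0 = (\<Sum>i\<in>UNIV. x$i)" using xT by (simp add: tangent_space_def)
    also have "\<dots> = (\<Sum>i\<in>UNIV. e$i * ln (l$i) - (a$i * e$i) * \<tau>)"
      by (rule sum.cong) (simp_all add: xi algebra_simps)
    also have "\<dots> = L - A * \<tau>"
      by (simp only: sum_subtractf sum_distrib_right L_def A_def)
    finally have "\<tau> = L / A" using A0 by (simp add: field_simps)
    then show ?thesis using xi by (simp add: vec_eq_iff v_def)
  qed
  have "Log_C a l = v"
    unfolding Log_C_def inv_into_def
  proof (rule some_equality)
    show "v \<in> tangent_space \<and> Exp_C a v = l" using vT Ev by blast
  next
    fix x assume "x \<in> tangent_space \<and> Exp_C a x = l"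
    then show "x = v" using uniq by blast
  qed
  then show ?thesis using rhs by simp
qed

end
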